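(* Let $\mathcal{X}$ be a finite alphabet and let $P_0,P_1$ be probability mass functions on $\mathcal{X}$ with the same support $\mathcal{X}$. Let $n>1$, $k^\star\in(1,n]$ an integer, and $\mathcal{D}=(x_1,\dots,x_n)$ a random dataset with independent entries, $x_1,\dots,x_{k^\star-1}\sim P_0$ and $x_{k^\star},\dots,x_n\sim P_1$. Let $\hat k\in\arg\max_{k\in[n]}\sum_{i=k}^n\log\frac{P_1(x_i)}{P_0(x_i)}$. Let $s=\max_{x}\log\frac{P_1(x)}{P_0(x)}-\min_{x}\log\frac{P_1(x)}{P_0(x)}$ and $C=\min\{D_{\mathrm{KL}}(P_0\|P_1),D_{\mathrm{KL}}(P_1\|P_0)\}$. Then for every $\alpha\in[n]$, the estimator is $(\alpha,\beta)$-accurate with $$\beta\le 2\min\Big\{\frac{t(1-t^M)}{1-t};\ \exp\big(-\alpha I_{ch}(P_0,P_1)\big)\Big\},$$ where $t=\exp(-\alpha C^2/s^2)$ and $M=\lfloor\frac{n-1}{\alpha}\rfloor$.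
   Context: $[a]=\{1,\dots,a\}$; natural logarithms. $(\alpha,\beta)$-accurate means $\mathbb{P}\{\hat k\notin[k^\star-\alpha,k^\star+\alpha]\}=\beta$ (so the claim bounds this probability). Chernoff information: $I_{ch}(P_0,P_1)=-\min_{\lambda\in(0,1)}\log\big(\sum_{x}P_0(x)^\lambda P_1(x)^{1-\lambda}\big)$. *)

theory Defs
  imports "HOL-Probability.Probability"
begin

definition llr :: "'a pmf \<Rightarrow> 'a pmf \<Rightarrow> 'a \<Rightarrow> real" where
  "llr P0 P1 x = ln (pmf P1 x / pmf P0 x)"

definition KL :: "'a::finite pmf \<Rightarrow> 'a pmf \<Rightarrow> real" where
  "KL P Q = (\<Sum>x\<in>UNIV. pmf P x * ln (pmf P x / pmf Q x))"

(* Chernoff information: - min over lambda in (0,1) of log sum P0^lambda P1^(1-lambda);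
   the minimum is attained, so it equals the infimum *)
definition chernoff_info :: "'a::finite pmf \<Rightarrow> 'a pmf \<Rightarrow> real" where
  "chernoff_info P0 P1 =
     - (INF l\<in>{0<..<1::real}. ln (\<Sum>x\<in>UNIV. pmf P0 x powr l * pmf P1 x powr (1 - l)))"

definition dataset :: "nat \<Rightarrow> nat \<Rightarrow> 'a pmf \<Rightarrow> 'a pmf \<Rightarrow> (nat \<Rightarrow> 'a) pmf" where
  "dataset n kstar P0 P1 = Pi_pmf {1..n} undefined (\<lambda>i. if i < kstar then P0 else P1)"

definition cp_argmax :: "nat \<Rightarrow> 'a pmf \<Rightarrow> 'a pmf \<Rightarrow> (nat \<Rightarrow> 'a) \<Rightarrow> nat set" where
  "cp_argmax n P0 P1 xs =
     {k \<in> {1..n}. \<forall>k'\<in>{1..n}. (\<Sum>i=k'..n. llr P0 P1 (xs i)) \<le> (\<Sum>i=k..n. llr P0 P1 (xs i))}"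

end

theory Submission
  imports Defs
begin

lemma prob_bind_finite:
  fixes M :: "'a::finite pmf"
  shows "measure_pmf.prob (bind_pmf M N) X = (\<Sum>x\<in>UNIV. pmf M x * measure_pmf.prob (N x) X)"
proof -
  have "emeasure (measure_pmf (bind_pmf M N)) X = (\<integral>\<^sup>+x. emeasure (N x) X \<partial>M)" by simp
  also have "\<dots> = (\<Sum>x\<in>UNIV. emeasure (N x) X * pmf M x)"
    by (rule nn_integral_measure_pmf_support) auto
  also have "\<dots> = ennreal (\<Sum>x\<in>UNIV. pmf M x * measure_pmf.prob (N x) X)"
    by (subst sum_ennreal[symmetric]) (auto simp: measure_pmf.emeasure_eq_measure ennreal_mult' mult.commute intro!: sum.cong)
  finally have "ennreal (measure_pmf.prob (bind_pmf M N) X) = ennreal (\<Sum>x\<in>UNIV. pmf M x * measure_pmf.prob (N x) X)"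
    by (simp add: measure_pmf.emeasure_eq_measure)
  then show ?thesis
    by (subst (asm) ennreal_inj) (auto intro!: sum_nonneg)
qed

lemma Pi_pmf_insert_bind:
  assumes "finite A" "x \<notin> A"
  shows "Pi_pmf (insert x A) dflt p = bind_pmf (p x) (\<lambda>y. map_pmf (\<lambda>f. f(x:=y)) (Pi_pmf A dflt p))"
  using assms by (subst Pi_pmf_insert') (auto simp: map_pmf_def)

lemma core:
  fixes Q :: "'a::finite pmf" and g :: "'a \<Rightarrow> real" and p :: "nat \<Rightarrow> 'a pmf"
    and ix :: "nat \<Rightarrow> nat" and lam c rho :: real
  assumes lam: "lam \<ge> 0" and rho_def: "rho = (\<Sum>x\<in>UNIV. pmf Q x * exp (- lam * g x))"
    and rho1: "rho \<le> 1"
  shows "inj_on ix {..<N} \<Longrightarrow> (\<forall>j<N. p (ix j) = Q) \<Longrightarrow>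
    measure_pmf.prob (Pi_pmf (ix ` {..<N}) d p)
       {xs. \<exists>m. L \<le> m \<and> m \<le> N \<and> c + (\<Sum>j<m. g (xs (ix j))) \<le> 0}
      \<le> exp (- lam * c) * rho ^ L"
proof (induction N arbitrary: ix c L)
  have rho0: "rho \<ge> 0" unfolding rho_def by (intro sum_nonneg) auto
  case 0
  show ?case
  proof (cases "L = 0 \<and> c \<le> 0")
    case True
    have "exp 0 \<le> exp (- lam * c)" using True lam by (intro exp_mono) (simp add: mult_nonneg_nonpos)
    then have "1 \<le> exp (- lam * c) * rho ^ L" using True by simp
    then show ?thesis using measure_pmf.prob_le_1 order_trans by blast
  next
    case False
    then have "{xs. \<exists>m. L \<le> m \<and> m \<le> (0::nat) \<and> c + (\<Sum>j<m. g (xs (ix j))) \<le> 0} = {}" by auto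
    then show ?thesis using rho0 by simp
  qed
next
  case (Suc N)
  have rho0: "rho \<ge> 0" unfolding rho_def by (intro sum_nonneg) auto
  show ?case
  proof (cases "L = 0 \<and> c \<le> 0")
    case True
    have "exp 0 \<le> exp (- lam * c)" using True lam by (intro exp_mono) (simp add: mult_nonneg_nonpos)
    then have "1 \<le> exp (- lam * c) * rho ^ L" using True by simp
    then show ?thesis using measure_pmf.prob_le_1 order_trans by blast
  next
    case False
    define B where "B = (ix \<circ> Suc) ` {..<N}"
    have ins: "ix ` {..<Suc N} = insert (ix 0) B"
      unfolding B_def lessThan_Suc_eq_insert_0 by (auto simp: image_image)
    have notin: "ix 0 \<notin> B" using Suc.prems(1) unfolding B_def by (auto simp: inj_on_def)
    have inj': "inj_on (ix \<circ> Suc) {..<N}" using Suc.prems(1) by (auto simp: inj_on_def)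
    have pq': "\<forall>j<N. p ((ix \<circ> Suc) j) = Q" using Suc.prems(2) by auto
    have p0: "p (ix 0) = Q" using Suc.prems(2) by auto
    define E where "E = {xs. \<exists>m. L \<le> m \<and> m \<le> Suc N \<and> c + (\<Sum>j<m. g (xs (ix j))) \<le> 0}"
    define E' where "E' = (\<lambda>c'. {xs. \<exists>m. L - 1 \<le> m \<and> m \<le> N \<and> c' + (\<Sum>j<m. g (xs ((ix \<circ> Suc) j))) \<le> 0})"
    have sub: "(\<lambda>f. f(ix 0 := y)) -` E \<subseteq> E' (c + g y)" for y
    proof
      fix f assume "f \<in> (\<lambda>f. f(ix 0 := y)) -` E"
      then obtain m where m: "L \<le> m" "m \<le> Suc N" "c + (\<Sum>j<m. g ((f(ix 0 := y)) (ix j))) \<le> 0"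
        unfolding E_def by auto
      have "m \<noteq> 0"
      proof
        assume "m = 0" with m False show False by simp
      qed
      then obtain m' where m': "m = Suc m'" using not0_implies_Suc by blast
      have "(\<Sum>j<m. g ((f(ix 0 := y)) (ix j))) = g y + (\<Sum>j<m'. g (f ((ix \<circ> Suc) j)))"
        unfolding m' sum.lessThan_Suc_shift
      proof (intro arg_cong2[where f="(+)"] sum.cong)
        fix j assume "j \<in> {..<m'}"
        then have "ix (Suc j) \<noteq> ix 0" using Suc.prems(1) m m' by (auto simp: inj_on_def)
        then show "g ((f(ix 0 := y)) (ix (Suc j))) = g (f ((ix \<circ> Suc) j))" by simp
      qed auto
      then show "f \<in> E' (c + g y)" using m m' unfolding E'_def by (auto intro!: exI[of _ m'] simp: add.assoc)
    qed
    have "measure_pmf.prob (Pi_pmf (ix ` {..<Suc N}) d p) E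
        = (\<Sum>y\<in>UNIV. pmf Q y * measure_pmf.prob (Pi_pmf B d p) ((\<lambda>f. f(ix 0 := y)) -` E))"
      unfolding ins using notin p0 by (simp add: Pi_pmf_insert_bind B_def prob_bind_finite)
    also have "\<dots> \<le> (\<Sum>y\<in>UNIV. pmf Q y * (exp (- lam * (c + g y)) * rho ^ (L - 1)))"
    proof (intro sum_mono mult_left_mono)
      fix y
      have "measure_pmf.prob (Pi_pmf B d p) ((\<lambda>f. f(ix 0 := y)) -` E) \<le> measure_pmf.prob (Pi_pmf B d p) (E' (c + g y))"
        using sub by (intro measure_pmf.finite_measure_mono) auto
      also have "\<dots> \<le> exp (- lam * (c + g y)) * rho ^ (L - 1)"
        using Suc.IH[where c="c + g y" and L="L - 1", OF inj' pq'] unfolding E'_def B_def by simp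
      finally show "measure_pmf.prob (Pi_pmf B d p) ((\<lambda>f. f(ix 0 := y)) -` E) \<le> exp (- lam * (c + g y)) * rho ^ (L - 1)" .
    qed auto
    also have "\<dots> = exp (- lam * c) * rho ^ (L - 1) * rho"
      unfolding rho_def sum_distrib_left
      by (intro sum.cong) (auto simp: algebra_simps exp_add[symmetric])
    also have "\<dots> \<le> exp (- lam * c) * rho ^ L"
    proof (cases L)
      case 0 then show ?thesis using rho1 by simp
    next
      case (Suc L') then show ?thesis by simp
    qed
    finally show ?thesis unfolding E_def .
  qed
qed


lemma pmf_pos: "set_pmf P = UNIV \<Longrightarrow> pmf P x > 0"
  by (metis UNIV_I less_eq_real_def pmf_nonneg set_pmf_iff)

lemma sum_pmf_UNIV: "(\<Sum>x\<in>UNIV. pmf (P::'a::finite pmf) x) = 1"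
  by (rule sum_pmf_eq_1) auto

lemma KL_pos:
  fixes P Q :: "'a::finite pmf"
  assumes sP: "set_pmf P = UNIV" and sQ: "set_pmf Q = UNIV" and ne: "P \<noteq> Q"
  shows "KL P Q > 0"
proof -
  have "\<exists>x. pmf P x \<noteq> pmf Q x"
  proof (rule ccontr)
    assume "\<not> (\<exists>x. pmf P x \<noteq> pmf Q x)"
    then have "P = Q" by (intro pmf_eqI) auto
    with ne show False by simp
  qed
  then obtain x0 where x0: "pmf P x0 \<noteq> pmf Q x0" by blast
  have le: "pmf P x * ln (pmf Q x / pmf P x) \<le> pmf Q x - pmf P x" for x
  proof -
    have p: "pmf P x > 0" "pmf Q x > 0" using pmf_pos[OF sP] pmf_pos[OF sQ] by auto
    have "ln (pmf Q x / pmf P x) \<le> pmf Q x / pmf P x - 1" using p by (intro ln_le_minus_one) simp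
    then have "pmf P x * ln (pmf Q x / pmf P x) \<le> pmf P x * (pmf Q x / pmf P x - 1)"
      using p by (intro mult_left_mono) auto
    also have "\<dots> = pmf Q x - pmf P x" using p by (simp add: field_simps)
    finally show ?thesis .
  qed
  have lt: "pmf P x0 * ln (pmf Q x0 / pmf P x0) < pmf Q x0 - pmf P x0"
  proof -
    have p: "pmf P x0 > 0" "pmf Q x0 > 0" using pmf_pos[OF sP] pmf_pos[OF sQ] by auto
    have ne1: "pmf Q x0 / pmf P x0 \<noteq> 1" using x0 p by auto
    have a: "ln (pmf Q x0 / pmf P x0) \<le> pmf Q x0 / pmf P x0 - 1"
      using p by (intro ln_le_minus_one) simp
    have b: "ln (pmf Q x0 / pmf P x0) \<noteq> pmf Q x0 / pmf P x0 - 1"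
    proof
      assume "ln (pmf Q x0 / pmf P x0) = pmf Q x0 / pmf P x0 - 1"
      with ln_eq_minus_one[of "pmf Q x0 / pmf P x0"] p ne1 show False by simp
    qed
    have "ln (pmf Q x0 / pmf P x0) < pmf Q x0 / pmf P x0 - 1"
      using a b by linarith
    then have "pmf P x0 * ln (pmf Q x0 / pmf P x0) < pmf P x0 * (pmf Q x0 / pmf P x0 - 1)"
      using p by (intro mult_strict_left_mono) auto
    also have "\<dots> = pmf Q x0 - pmf P x0" using p by (simp add: field_simps)
    finally show ?thesis .
  qed
  have "(\<Sum>x\<in>UNIV. pmf P x * ln (pmf Q x / pmf P x)) < (\<Sum>x\<in>UNIV. pmf Q x - pmf P x)"
    by (rule sum_strict_mono_ex1) (use le lt in auto)
  also have "\<dots> = 0" by (simp add: sum_subtractf sum_pmf_UNIV)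
  finally have neg: "(\<Sum>x\<in>UNIV. pmf P x * ln (pmf Q x / pmf P x)) < 0" .
  have "KL P Q = - (\<Sum>x\<in>UNIV. pmf P x * ln (pmf Q x / pmf P x))"
    unfolding KL_def sum_negf[symmetric]
  proof (intro sum.cong refl)
    fix x
    have p: "pmf P x > 0" "pmf Q x > 0" using pmf_pos[OF sP] pmf_pos[OF sQ] by auto
    show "pmf P x * ln (pmf P x / pmf Q x) = - (pmf P x * ln (pmf Q x / pmf P x))"
      using p by (simp add: ln_div algebra_simps)
  qed
  with neg show ?thesis by simp
qed

lemma amgm_powr:
  assumes "a > 0" "b > 0" "0 \<le> l" "l \<le> (1::real)"
  shows "a powr l * b powr (1 - l) \<le> l * a + (1 - l) * b"
proof -
  have "exp ((1 - (1 - l)) *\<^sub>R ln a + (1 - l) *\<^sub>R ln b) \<le> (1 - (1 - l)) * exp (ln a) + (1 - l) * exp (ln b)"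
    using assms by (intro convex_onD[OF exp_convex]) auto
  then show ?thesis using assms by (simp add: powr_def exp_add)
qed

lemma hoeff:
  fixes Q :: "'a::finite pmf" and g :: "'a \<Rightarrow> real"
  assumes lam: "lam > 0" and bnd: "\<And>x. a \<le> g x" "\<And>x. g x \<le> b"
  shows "(\<Sum>x\<in>UNIV. pmf Q x * exp (- lam * g x))
           \<le> exp (- lam * (\<Sum>x\<in>UNIV. pmf Q x * g x) + lam\<^sup>2 * (b - a)\<^sup>2 / 8)"
proof -
  interpret interval_bounded_random_variable "measure_pmf Q" "\<lambda>x. - g x" "- b" "- a"
    by unfold_locales (use bnd in auto)
  have H: "nn_integral (measure_pmf Q) (\<lambda>x. exp (lam * (measure_pmf.expectation Q g - g x)))
           \<le> ennreal (exp (lam\<^sup>2 * (b - a)\<^sup>2 / 8))"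
    using Hoeffdings_lemma_nn_integral[OF lam] by simp
  define mu where "mu = (\<Sum>x\<in>UNIV. pmf Q x * g x)"
  have E: "measure_pmf.expectation Q g = mu"
    unfolding mu_def by (subst integral_measure_pmf_real[where A=UNIV]) (auto simp: mult.commute)
  have "nn_integral (measure_pmf Q) (\<lambda>x. exp (lam * (measure_pmf.expectation Q g - g x)))
        = (\<Sum>x\<in>UNIV. ennreal (exp (lam * (- g x + mu))) * pmf Q x)"
    unfolding E by (subst nn_integral_measure_pmf_support[where A=UNIV]) auto
  also have "\<dots> = ennreal (\<Sum>x\<in>UNIV. exp (lam * (- g x + mu)) * pmf Q x)"
    by (subst sum_ennreal[symmetric]) (auto simp: ennreal_mult')
  finally have "ennreal (\<Sum>x\<in>UNIV. exp (lam * (- g x + mu)) * pmf Q x) \<le> ennreal (exp (lam\<^sup>2 * (b - a)\<^sup>2 / 8))"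
    using H by (simp add: add.commute)
  then have S: "(\<Sum>x\<in>UNIV. exp (lam * (- g x + mu)) * pmf Q x) \<le> exp (lam\<^sup>2 * (b - a)\<^sup>2 / 8)"
    by (subst (asm) ennreal_le_iff) auto
  have "(\<Sum>x\<in>UNIV. exp (lam * (- g x + mu)) * pmf Q x) = exp (lam * mu) * (\<Sum>x\<in>UNIV. pmf Q x * exp (- lam * g x))"
    unfolding sum_distrib_left by (intro sum.cong) (auto simp: algebra_simps exp_add[symmetric])
  with S have "(\<Sum>x\<in>UNIV. pmf Q x * exp (- lam * g x)) \<le> exp (lam\<^sup>2 * (b - a)\<^sup>2 / 8) / exp (lam * mu)"
    by (simp add: field_simps)
  also have "\<dots> = exp (- lam * mu + lam\<^sup>2 * (b - a)\<^sup>2 / 8)" by (subst exp_diff[symmetric]) simp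
  finally show ?thesis unfolding mu_def .
qed


lemma side:
  fixes Q :: "'a::finite pmf" and g :: "'a \<Rightarrow> real" and p :: "nat \<Rightarrow> 'a pmf"
    and ix :: "nat \<Rightarrow> nat" and lam rho :: real
  assumes lam: "lam \<ge> 0" and rho_def: "rho = (\<Sum>x\<in>UNIV. pmf Q x * exp (- lam * g x))"
    and rho1: "rho \<le> 1" and inj: "inj_on ix {..<N}" and pQ: "\<forall>j<N. p (ix j) = Q"
    and sub: "ix ` {..<N} \<subseteq> A" and fin: "finite A"
  shows "measure_pmf.prob (Pi_pmf A d p)
       {xs. \<exists>m. L \<le> m \<and> m \<le> N \<and> (\<Sum>j<m. g (xs (ix j))) \<le> 0} \<le> rho ^ L"
proof -
  define E where "E = {xs. \<exists>m. L \<le> m \<and> m \<le> N \<and> 0 + (\<Sum>j<m. g (xs (ix j))) \<le> 0}"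
  define J where "J = ix ` {..<N}"
  have "Pi_pmf J d p = map_pmf (\<lambda>f x. if x \<in> J then f x else d) (Pi_pmf A d p)"
    using fin sub unfolding J_def by (intro Pi_pmf_subset) auto
  then have "measure_pmf.prob (Pi_pmf J d p) E = measure_pmf.prob (Pi_pmf A d p) ((\<lambda>f x. if x \<in> J then f x else d) -` E)"
    by simp
  also have "(\<lambda>f x. if x \<in> J then f x else d) -` E = E"
    unfolding E_def J_def by auto
  finally have eq: "measure_pmf.prob (Pi_pmf A d p) E = measure_pmf.prob (Pi_pmf J d p) E" by simp
  have "measure_pmf.prob (Pi_pmf J d p) E \<le> exp (- lam * 0) * rho ^ L"
    unfolding E_def J_def by (rule core[OF lam rho_def rho1 inj pQ])
  then show ?thesis using eq unfolding E_def by simp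
qed

lemma sum_shift_up: fixes a m :: nat shows "(\<Sum>i=a..<a+m. f i) = (\<Sum>j<m. f (a + j))"
  by (induction m) auto

lemma sum_shift_down: fixes b m :: nat shows "m \<le> b \<Longrightarrow> (\<Sum>i=b-m..<b. f i) = (\<Sum>j<m. f (b - 1 - j))"
proof (induction m)
  case 0 then show ?case by simp
next
  case (Suc m)
  have "{b - Suc m..<b} = insert (b - Suc m) {b - m..<b}" using Suc.prems by auto
  then have "(\<Sum>i=b - Suc m..<b. f i) = f (b - Suc m) + (\<Sum>i=b-m..<b. f i)"
    using Suc.prems by simp
  also have "\<dots> = f (b - 1 - m) + (\<Sum>j<m. f (b - 1 - j))" using Suc by simp
  finally show ?case by (simp add: add.commute)
qed

lemma err_sub:
  fixes P0 P1 :: "'a::finite pmf" and n kstar alpha :: nat and khat :: "(nat \<Rightarrow> 'a) \<Rightarrow> nat"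
  assumes kstar: "1 < kstar" "kstar \<le> n"
    and khat: "\<And>xs. khat xs \<in> cp_argmax n P0 P1 xs"
  shows "{xs. int (khat xs) \<notin> {int kstar - int alpha .. int kstar + int alpha}} \<subseteq>
     {xs. \<exists>m. alpha + 1 \<le> m \<and> m \<le> n + 1 - kstar \<and> (\<Sum>j<m. llr P0 P1 (xs (kstar + j))) \<le> 0} \<union>
     {xs. \<exists>m. alpha + 1 \<le> m \<and> m \<le> kstar - 1 \<and> (\<Sum>j<m. - llr P0 P1 (xs (kstar - 1 - j))) \<le> 0}"
proof
  fix xs assume xs: "xs \<in> {xs. int (khat xs) \<notin> {int kstar - int alpha .. int kstar + int alpha}}"
  define k where "k = khat xs"
  define Y where "Y = (\<lambda>i. llr P0 P1 (xs i))"
  have k: "k \<in> {1..n}" "\<And>k'. k' \<in> {1..n} \<Longrightarrow> (\<Sum>i=k'..n. Y i) \<le> (\<Sum>i=k..n. Y i)"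
    using khat[of xs] unfolding k_def Y_def cp_argmax_def by auto
  have ks: "(\<Sum>i=kstar..n. Y i) \<le> (\<Sum>i=k..n. Y i)" using k kstar by auto
  have out: "kstar + alpha < k \<or> k + alpha < kstar" using xs unfolding k_def by auto
  then show "xs \<in> {xs. \<exists>m. alpha + 1 \<le> m \<and> m \<le> n + 1 - kstar \<and> (\<Sum>j<m. llr P0 P1 (xs (kstar + j))) \<le> 0} \<union>
     {xs. \<exists>m. alpha + 1 \<le> m \<and> m \<le> kstar - 1 \<and> (\<Sum>j<m. - llr P0 P1 (xs (kstar - 1 - j))) \<le> 0}"
  proof
    assume A: "kstar + alpha < k"
    have "(\<Sum>i=kstar..n. Y i) = (\<Sum>i=kstar..<Suc n. Y i)" by (simp add: atLeastLessThanSuc_atLeastAtMost)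
    also have "\<dots> = (\<Sum>i=kstar..<k. Y i) + (\<Sum>i=k..<Suc n. Y i)"
      using A k by (intro sum.atLeastLessThan_concat[symmetric]) auto
    also have "(\<Sum>i=k..<Suc n. Y i) = (\<Sum>i=k..n. Y i)" by (simp add: atLeastLessThanSuc_atLeastAtMost)
    finally have "(\<Sum>i=kstar..<k. Y i) \<le> 0" using ks by simp
    moreover have "(\<Sum>i=kstar..<k. Y i) = (\<Sum>j<k - kstar. Y (kstar + j))"
      using sum_shift_up[of Y kstar "k - kstar"] A by simp
    ultimately have "(\<Sum>j<k - kstar. llr P0 P1 (xs (kstar + j))) \<le> 0" unfolding Y_def by simp
    moreover have "alpha + 1 \<le> k - kstar" "k - kstar \<le> n + 1 - kstar" using A k by auto
    ultimately show ?thesis by blast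
  next
    assume A: "k + alpha < kstar"
    have "(\<Sum>i=k..n. Y i) = (\<Sum>i=k..<Suc n. Y i)" by (simp add: atLeastLessThanSuc_atLeastAtMost)
    also have "\<dots> = (\<Sum>i=k..<kstar. Y i) + (\<Sum>i=kstar..<Suc n. Y i)"
      using A kstar by (intro sum.atLeastLessThan_concat[symmetric]) auto
    also have "(\<Sum>i=kstar..<Suc n. Y i) = (\<Sum>i=kstar..n. Y i)" by (simp add: atLeastLessThanSuc_atLeastAtMost)
    finally have "0 \<le> (\<Sum>i=k..<kstar. Y i)" using ks by simp
    moreover have "(\<Sum>i=k..<kstar. Y i) = (\<Sum>j<kstar - k. Y (kstar - 1 - j))"
      using sum_shift_down[of "kstar - k" kstar Y] A by simp
    ultimately have "(\<Sum>j<kstar - k. - llr P0 P1 (xs (kstar - 1 - j))) \<le> 0" unfolding Y_def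
      by (simp add: sum_negf)
    moreover have "alpha + 1 \<le> kstar - k" "kstar - k \<le> kstar - 1" using A k by auto
    ultimately show ?thesis by blast
  qed
qed


lemma gen_bound:
  fixes P0 P1 :: "'a::finite pmf" and n kstar alpha :: nat and khat :: "(nat \<Rightarrow> 'a) \<Rightarrow> nat"
  assumes kstar: "1 < kstar" "kstar \<le> n"
    and khat: "\<And>xs. khat xs \<in> cp_argmax n P0 P1 xs"
    and lR: "lamR \<ge> 0" and rR: "(\<Sum>x\<in>UNIV. pmf P1 x * exp (- lamR * llr P0 P1 x)) \<le> 1"
    and lL: "lamL \<ge> 0" and rL: "(\<Sum>x\<in>UNIV. pmf P0 x * exp (- lamL * (- llr P0 P1 x))) \<le> 1"
  shows "measure_pmf.prob (dataset n kstar P0 P1)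
          {xs. int (khat xs) \<notin> {int kstar - int alpha .. int kstar + int alpha}}
     \<le> (\<Sum>x\<in>UNIV. pmf P1 x * exp (- lamR * llr P0 P1 x)) ^ (alpha + 1)
       + (\<Sum>x\<in>UNIV. pmf P0 x * exp (- lamL * (- llr P0 P1 x))) ^ (alpha + 1)"
proof -
  define pp where "pp = (\<lambda>i. if i < kstar then P0 else P1)"
  define R where "R = {xs. \<exists>m. alpha + 1 \<le> m \<and> m \<le> n + 1 - kstar \<and> (\<Sum>j<m. llr P0 P1 (xs (kstar + j))) \<le> 0}"
  define Lf where "Lf = {xs. \<exists>m. alpha + 1 \<le> m \<and> m \<le> kstar - 1 \<and> (\<Sum>j<m. - llr P0 P1 (xs (kstar - 1 - j))) \<le> 0}"
  have D: "dataset n kstar P0 P1 = Pi_pmf {1..n} undefined pp" unfolding dataset_def pp_def by simp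
  have "measure_pmf.prob (dataset n kstar P0 P1)
          {xs. int (khat xs) \<notin> {int kstar - int alpha .. int kstar + int alpha}}
        \<le> measure_pmf.prob (dataset n kstar P0 P1) (R \<union> Lf)"
    using err_sub[OF kstar khat, of alpha] unfolding R_def Lf_def
    by (intro measure_pmf.finite_measure_mono) auto
  also have "\<dots> \<le> measure_pmf.prob (dataset n kstar P0 P1) R + measure_pmf.prob (dataset n kstar P0 P1) Lf"
    by (rule measure_Un_le) auto
  also have "measure_pmf.prob (dataset n kstar P0 P1) R \<le> (\<Sum>x\<in>UNIV. pmf P1 x * exp (- lamR * llr P0 P1 x)) ^ (alpha + 1)"
    unfolding D R_def
    by (rule side[OF lR refl rR, where ix="\<lambda>j. kstar + j" and N="n + 1 - kstar"])
       (use kstar in \<open>auto simp: inj_on_def pp_def\<close>)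
  also have "measure_pmf.prob (dataset n kstar P0 P1) Lf \<le> (\<Sum>x\<in>UNIV. pmf P0 x * exp (- lamL * (- llr P0 P1 x))) ^ (alpha + 1)"
    unfolding D Lf_def
    by (rule side[OF lL refl rL, where ix="\<lambda>j. kstar - 1 - j" and N="kstar - 1"])
       (use kstar in \<open>auto simp: inj_on_def pp_def\<close>)
  finally show ?thesis by simp
qed


lemma t_le_geom:
  fixes t :: real and M :: nat
  assumes "0 < t" "t < 1" "M \<ge> 1"
  shows "t \<le> t * (1 - t ^ M) / (1 - t)"
proof -
  have "t ^ M \<le> t ^ 1" using assms by (intro power_decreasing) auto
  then have "t * (1 - t) \<le> t * (1 - t ^ M)" using assms by (intro mult_left_mono) auto
  then show ?thesis using assms by (simp add: le_divide_eq)
qed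

theorem corollary3p2:
  fixes P0 P1 :: "'a::finite pmf" and n kstar alpha :: nat
    and khat :: "(nat \<Rightarrow> 'a) \<Rightarrow> nat"
  assumes supp0: "set_pmf P0 = UNIV" and supp1: "set_pmf P1 = UNIV"
    and neq: "P0 \<noteq> P1"
    and n: "n > 1" and kstar: "1 < kstar" "kstar \<le> n"
    and khat: "\<And>xs. khat xs \<in> cp_argmax n P0 P1 xs"
    and alpha: "1 \<le> alpha" "alpha \<le> n"
  shows
    "let s = Max (range (llr P0 P1)) - Min (range (llr P0 P1));
         C = min (KL P0 P1) (KL P1 P0);
         t = exp (- real alpha * C\<^sup>2 / s\<^sup>2);
         M = (n - 1) div alpha
     in measure_pmf.prob (dataset n kstar P0 P1)
          {xs. int (khat xs) \<notin> {int kstar - int alpha .. int kstar + int alpha}}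
        \<le> 2 * min (t * (1 - t ^ M) / (1 - t)) (exp (- real alpha * chernoff_info P0 P1))"
proof -
  define Mx where "Mx = Max (range (llr P0 P1))"
  define Mn where "Mn = Min (range (llr P0 P1))"
  define s where "s = Mx - Mn"
  define C where "C = min (KL P0 P1) (KL P1 P0)"
  define t where "t = exp (- real alpha * C\<^sup>2 / s\<^sup>2)"
  define M where "M = (n - 1) div alpha"
  define Err where "Err = {xs. int (khat xs) \<notin> {int kstar - int alpha .. int kstar + int alpha}}"
  define P where "P = measure_pmf.prob (dataset n kstar P0 P1) Err"
  have pos0: "\<And>x. pmf P0 x > 0" using pmf_pos[OF supp0] .
  have pos1: "\<And>x. pmf P1 x > 0" using pmf_pos[OF supp1] .
  have bMx: "\<And>x. llr P0 P1 x \<le> Mx" unfolding Mx_def by (intro Max_ge) auto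
  have bMn: "\<And>x. Mn \<le> llr P0 P1 x" unfolding Mn_def by (intro Min_le) auto
  have KL10: "KL P1 P0 = (\<Sum>x\<in>UNIV. pmf P1 x * llr P0 P1 x)" unfolding KL_def llr_def ..
  have KL01: "KL P0 P1 = (\<Sum>x\<in>UNIV. pmf P0 x * (- llr P0 P1 x))" unfolding KL_def llr_def
  proof (intro sum.cong refl)
    fix x show "pmf P0 x * ln (pmf P0 x / pmf P1 x) = pmf P0 x * - ln (pmf P1 x / pmf P0 x)"
      using pos0[of x] pos1[of x] by (simp add: ln_div)
  qed
  have K1: "KL P0 P1 > 0" by (rule KL_pos[OF supp0 supp1 neq])
  have K2: "KL P1 P0 > 0" using neq by (intro KL_pos[OF supp1 supp0]) auto
  have Cpos: "C > 0" unfolding C_def using K1 K2 by simp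
  have "\<exists>x. llr P0 P1 x > 0"
  proof (rule ccontr)
    assume "\<not> (\<exists>x. llr P0 P1 x > 0)"
    then have "(\<Sum>x\<in>UNIV. pmf P1 x * llr P0 P1 x) \<le> 0"
      by (intro sum_nonpos) (simp add: mult_nonneg_nonpos not_less)
    with K2 KL10 show False by simp
  qed
  then obtain x1 where x1: "llr P0 P1 x1 > 0" by blast
  have "\<exists>x. llr P0 P1 x < 0"
  proof (rule ccontr)
    assume "\<not> (\<exists>x. llr P0 P1 x < 0)"
    then have "(\<Sum>x\<in>UNIV. pmf P0 x * (- llr P0 P1 x)) \<le> 0"
      by (intro sum_nonpos) (simp add: mult_nonneg_nonpos not_less)
    with K1 KL01 show False by simp
  qed
  then obtain x2 where x2: "llr P0 P1 x2 < 0" by blast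
  have spos: "s > 0" unfolding s_def using bMx[of x1] bMn[of x2] x1 x2 by simp
  have P0le: "0 \<le> P" unfolding P_def by simp

  define rho where "rho = (\<lambda>l::real. \<Sum>x\<in>UNIV. pmf P0 x powr l * pmf P1 x powr (1 - l))"
  have chern: "P \<le> 2 * rho l ^ alpha" "rho l > 0" if l: "0 < l" "l < 1" for l
  proof -
    have eqR: "(\<Sum>x\<in>UNIV. pmf P1 x * exp (- l * llr P0 P1 x)) = rho l"
      unfolding rho_def
    proof (intro sum.cong refl)
      fix x
      have a: "pmf P0 x > 0" "pmf P1 x > 0" using pos0 pos1 by auto
      have "pmf P1 x * exp (- l * llr P0 P1 x) = exp (ln (pmf P1 x) + (- l * llr P0 P1 x))"
        using a by (simp only: exp_add exp_ln)
      also have "\<dots> = exp (l * ln (pmf P0 x) + (1 - l) * ln (pmf P1 x))"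
        using a by (intro arg_cong[where f=exp]) (simp add: llr_def ln_div algebra_simps)
      also have "\<dots> = pmf P0 x powr l * pmf P1 x powr (1 - l)"
        using a by (simp add: powr_def exp_add)
      finally show "pmf P1 x * exp (- l * llr P0 P1 x) = pmf P0 x powr l * pmf P1 x powr (1 - l)" .
    qed
    have eqL: "(\<Sum>x\<in>UNIV. pmf P0 x * exp (- (1 - l) * (- llr P0 P1 x))) = rho l"
      unfolding rho_def
    proof (intro sum.cong refl)
      fix x
      have a: "pmf P0 x > 0" "pmf P1 x > 0" using pos0 pos1 by auto
      have "pmf P0 x * exp (- (1 - l) * (- llr P0 P1 x)) = exp (ln (pmf P0 x) + (- (1 - l) * (- llr P0 P1 x)))"
        using a by (simp only: exp_add exp_ln)
      also have "\<dots> = exp (l * ln (pmf P0 x) + (1 - l) * ln (pmf P1 x))"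
        using a by (intro arg_cong[where f=exp]) (simp add: llr_def ln_div algebra_simps)
      also have "\<dots> = pmf P0 x powr l * pmf P1 x powr (1 - l)"
        using a by (simp add: powr_def exp_add)
      finally show "pmf P0 x * exp (- (1 - l) * (- llr P0 P1 x)) = pmf P0 x powr l * pmf P1 x powr (1 - l)" .
    qed
    have r1: "rho l \<le> 1"
    proof -
      have "rho l \<le> (\<Sum>x\<in>UNIV. l * pmf P0 x + (1 - l) * pmf P1 x)"
        unfolding rho_def using l pos0 pos1 by (intro sum_mono amgm_powr) auto
      also have "\<dots> = l * (\<Sum>x\<in>UNIV. pmf P0 x) + (1 - l) * (\<Sum>x\<in>UNIV. pmf P1 x)"
        by (simp add: sum.distrib sum_distrib_left)
      also have "\<dots> = 1" by (simp add: sum_pmf_UNIV)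
      finally show ?thesis .
    qed
    show rpos: "rho l > 0" unfolding rho_def
    proof (intro sum_pos)
      fix i
      have "pmf P0 i \<noteq> 0" "pmf P1 i \<noteq> 0" using pos0[of i] pos1[of i] by auto
      then show "0 < pmf P0 i powr l * pmf P1 i powr (1 - l)" by simp
    qed auto
    have "P \<le> rho l ^ (alpha + 1) + rho l ^ (alpha + 1)"
      using gen_bound[OF kstar khat, of l "1 - l" alpha] l r1 unfolding eqR eqL P_def Err_def by simp
    also have "\<dots> = 2 * (rho l ^ alpha * rho l)" by simp
    also have "\<dots> \<le> 2 * (rho l ^ alpha * 1)" using r1 rpos by (intro mult_left_mono) auto
    finally show "P \<le> 2 * rho l ^ alpha" by simp
  qed
  have chI: "- real alpha * chernoff_info P0 P1 = real alpha * (INF l\<in>{0<..<1::real}. ln (rho l))"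
    unfolding chernoff_info_def rho_def by simp
  have partB: "P \<le> 2 * exp (- real alpha * chernoff_info P0 P1)"
  proof (cases "P = 0")
    case True then show ?thesis by simp
  next
    case False
    with P0le have Ppos: "P > 0" by simp
    have al: "real alpha > 0" using alpha by simp
    have "ln (P / 2) / real alpha \<le> (INF l\<in>{0<..<1::real}. ln (rho l))"
    proof (rule cINF_greatest)
      show "{0<..<1::real} \<noteq> {}" by (auto intro: exI[of _ "1/2"])
    next
      fix l :: real assume "l \<in> {0<..<1}"
      then have l: "0 < l" "l < 1" by auto
      have "ln (P / 2) \<le> ln (rho l ^ alpha)"
        using chern[OF l] Ppos by (subst ln_le_cancel_iff) auto
      also have "\<dots> = real alpha * ln (rho l)" using chern(2)[OF l] by (simp add: ln_realpow)
      finally show "ln (P / 2) / real alpha \<le> ln (rho l)" using al by (simp add: divide_le_eq mult.commute)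
    qed
    then have "ln (P / 2) \<le> real alpha * (INF l\<in>{0<..<1::real}. ln (rho l))"
      using al by (simp add: divide_le_eq mult.commute)
    then have "exp (ln (P / 2)) \<le> exp (real alpha * (INF l\<in>{0<..<1::real}. ln (rho l)))" by simp
    then have "P / 2 \<le> exp (- real alpha * chernoff_info P0 P1)" using Ppos chI by simp
    then show ?thesis by simp
  qed

  have partA: "P \<le> 2 * (t * (1 - t ^ M) / (1 - t))"
  proof (cases "M = 0")
    case True
    then have "n - 1 < alpha" unfolding M_def using alpha by (simp add: div_eq_0_iff)
    have kr: "1 \<le> khat xs \<and> khat xs \<le> n" for xs using khat[of xs] unfolding cp_argmax_def by auto
    have "Err = {}"
    proof -
      have "int (khat xs) \<in> {int kstar - int alpha .. int kstar + int alpha}" for xs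
        using kr[of xs] kstar \<open>n - 1 < alpha\<close> by auto
      then show ?thesis unfolding Err_def by auto
    qed
    then show ?thesis using True unfolding P_def by simp
  next
    case False
    define lam where "lam = 4 * C / s\<^sup>2"
    have lam0: "lam > 0" unfolding lam_def using Cpos spos by simp
    define q where "q = exp (- 2 * C\<^sup>2 / s\<^sup>2)"
    have qeq: "- lam * C + lam\<^sup>2 * s\<^sup>2 / 8 = - 2 * C\<^sup>2 / s\<^sup>2"
      unfolding lam_def using spos by (simp add: field_simps power2_eq_square)
    define rR where "rR = (\<Sum>x\<in>UNIV. pmf P1 x * exp (- lam * llr P0 P1 x))"
    define rL where "rL = (\<Sum>x\<in>UNIV. pmf P0 x * exp (- lam * (- llr P0 P1 x)))"
    have rR: "rR \<le> q"
    proof -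
      have "rR \<le> exp (- lam * KL P1 P0 + lam\<^sup>2 * (Mx - Mn)\<^sup>2 / 8)"
        unfolding rR_def KL10 by (rule hoeff[OF lam0 bMn bMx])
      also have "\<dots> \<le> exp (- lam * C + lam\<^sup>2 * s\<^sup>2 / 8)"
        unfolding s_def C_def using lam0 by (simp add: mult_left_mono)
      finally show ?thesis unfolding q_def qeq .
    qed
    have rL: "rL \<le> q"
    proof -
      have "rL \<le> exp (- lam * KL P0 P1 + lam\<^sup>2 * (- Mn - - Mx)\<^sup>2 / 8)"
        unfolding rL_def KL01 by (rule hoeff[OF lam0]) (use bMn bMx in auto)
      also have "\<dots> \<le> exp (- lam * C + lam\<^sup>2 * s\<^sup>2 / 8)"
        unfolding s_def C_def using lam0 by (simp add: mult_left_mono power2_commute)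
      finally show ?thesis unfolding q_def qeq .
    qed
    have q1: "q \<le> 1" unfolding q_def by simp
    have rR0: "rR \<ge> 0" "rL \<ge> 0" unfolding rR_def rL_def by (auto intro!: sum_nonneg)
    have qt: "q ^ alpha \<le> t"
    proof -
      have "q ^ alpha = exp (real alpha * (- 2 * C\<^sup>2 / s\<^sup>2))" unfolding q_def by (subst exp_of_nat_mult) (rule refl)
      also have "\<dots> \<le> t" unfolding t_def using spos by (simp add: field_simps)
      finally show ?thesis .
    qed
    have each: "r ^ (alpha + 1) \<le> t" if "0 \<le> r" "r \<le> q" for r
    proof -
      have "r ^ (alpha + 1) = r ^ alpha * r" by simp
      also have "\<dots> \<le> q ^ alpha * 1" using that q1 by (intro mult_mono power_mono) auto
      finally show ?thesis using qt by simp
    qed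
    have "P \<le> rR ^ (alpha + 1) + rL ^ (alpha + 1)"
      unfolding P_def Err_def rR_def rL_def
      by (rule gen_bound[OF kstar khat]) (use lam0 rR rL q1 in \<open>auto simp: rR_def rL_def\<close>)
    also have "\<dots> \<le> 2 * t" using each[OF rR0(1) rR] each[OF rR0(2) rL] by simp
    also have "\<dots> \<le> 2 * (t * (1 - t ^ M) / (1 - t))"
    proof -
      have "t < 1" unfolding t_def using alpha Cpos spos by simp
      moreover have "t > 0" unfolding t_def by simp
      ultimately show ?thesis using False t_le_geom[of t M] by simp
    qed
    finally show ?thesis .
  qed
  have "P \<le> 2 * min (t * (1 - t ^ M) / (1 - t)) (exp (- real alpha * chernoff_info P0 P1))"
    using partA partB by simp
  then show ?thesis
    unfolding Let_def P_def Err_def t_def M_def C_def s_def Mx_def Mn_def .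
qed

end
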